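(* Let $d<\infty$, let $V\subset\mathbb{B}_d$ be an analytic disc attached to the unit sphere and $f$ its embedding map. Then for every $s<0$, $\mathcal{H}_s\neq\mathcal{H}_f$.
   Context: $\mathbb{D}$ is the open unit disc, $\mathbb{B}_d$ the open unit ball of $\mathbb{C}^d$. For $s\in\mathbb{R}$, $\mathcal{H}_s=\{h(z)=\sum_{n\ge0}a_nz^n:\ \sum_{n\ge0}(1+n)^{-s}|a_n|^2<\infty\}$. The Drury–Arveson space $H^2_d$ is the RKHS on $\mathbb{B}_d$ with kernel $1/(1-\langle z,w\rangle)$, with multiplier algebra $\mathcal{M}_d$. A variety is a common zero set in $\mathbb{B}_d$ of a family of functions from $\mathcal{M}_d$. An analytic disc attached to the unit sphere is a variety $V\subset\mathbb{B}_d$ ($d<\infty$) for which there is an injective analytic $f:\mathbb{D}\to\mathbb{B}_d$ with $f'(z)\neq0$ on $\mathbb{D}$, $V=f(\mathbb{D})$, $f$ extends to a $C^2$ map on $\overline{\mathbb{D}}$, and for $x\in\overline{\mathbb{D}}$, $\|f(x)\|=1$ iff $|x|=1$ ($f$ is the embedding map). $\mathcal{H}_f$ is the RKHS on $\mathbb{D}$ with kernel $k^f(z,w)=1/(1-\langle f(z),f(w)\rangle)$. Spaces are compared as sets of functions on $\mathbb{D}$. *)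

theory Defs
  imports "HOL-Analysis.Analysis"
begin

definition cinner :: "complex ^ 'd \<Rightarrow> complex ^ 'd \<Rightarrow> complex" where
  "cinner z w = (\<Sum>i\<in>UNIV. z $ i * cnj (w $ i))"

text \<open>A finite combination of kernel functions is represented by a list of
  (coefficient, point) pairs ps; it denotes the function z -> sum c * K z w.\<close>

definition kcomb :: "('a \<Rightarrow> 'a \<Rightarrow> complex) \<Rightarrow> (complex \<times> 'a) list \<Rightarrow> 'a \<Rightarrow> complex" where
  "kcomb K ps z = (\<Sum>(c, w)\<leftarrow>ps. c * K z w)"

text \<open>Squared norm: the norm of sum c_i k_{w_i} squared is
  sum_{i,j} c_i cnj(c_j) K(w_j, w_i).\<close>
definition knorm2 :: "('a \<Rightarrow> 'a \<Rightarrow> complex) \<Rightarrow> (complex \<times> 'a) list \<Rightarrow> real" where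
  "knorm2 K ps = Re (\<Sum>(c, w)\<leftarrow>ps. \<Sum>(c', w')\<leftarrow>ps. c * cnj c' * K w' w)"

definition kneg :: "(complex \<times> 'a) list \<Rightarrow> (complex \<times> 'a) list" where
  "kneg ps = map (\<lambda>(c, w). (- c, w)) ps"

text \<open>The RKHS H(K) on X: the completion of the span of the kernel functions,
  realised as pointwise limits on X of norm-Cauchy sequences in the span.\<close>
definition rkhs :: "('a \<Rightarrow> 'a \<Rightarrow> complex) \<Rightarrow> 'a set \<Rightarrow> ('a \<Rightarrow> complex) set" where
  "rkhs K X = {h. \<exists>ps :: nat \<Rightarrow> (complex \<times> 'a) list.
       (\<forall>n. snd ` set (ps n) \<subseteq> X) \<and>
       (\<forall>e>0. \<exists>N. \<forall>m\<ge>N. \<forall>n\<ge>N. knorm2 K (ps n @ kneg (ps m)) < e) \<and>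
       (\<forall>z\<in>X. (\<lambda>n. kcomb K (ps n) z) \<longlonglongrightarrow> h z)}"

definition Hs :: "real \<Rightarrow> (complex \<Rightarrow> complex) set" where
  "Hs s = {h. \<exists>a :: nat \<Rightarrow> complex.
       (\<forall>z\<in>ball 0 1. (\<lambda>n. a n * z ^ n) sums h z) \<and>
       summable (\<lambda>n. (1 + real n) powr (- s) * (cmod (a n))\<^sup>2)}"

definition DA_kernel :: "complex ^ 'd \<Rightarrow> complex ^ 'd \<Rightarrow> complex" where
  "DA_kernel z w = 1 / (1 - cinner z w)"

definition DA_space :: "(complex ^ 'd \<Rightarrow> complex) set" where
  "DA_space = rkhs DA_kernel (ball 0 1)"

definition DA_multipliers :: "(complex ^ 'd \<Rightarrow> complex) set" where
  "DA_multipliers = {\<phi>. \<forall>h\<in>DA_space. (\<lambda>z. \<phi> z * h z) \<in> DA_space}"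

definition DA_variety :: "(complex ^ 'd) set \<Rightarrow> bool" where
  "DA_variety V \<longleftrightarrow> (\<exists>S \<subseteq> DA_multipliers. V = {z \<in> ball 0 1. \<forall>\<phi>\<in>S. \<phi> z = 0})"

text \<open>C^2 in the real sense on an open set U (complex viewed as R^2).\<close>
definition C2_on :: "complex set \<Rightarrow> (complex \<Rightarrow> complex ^ 'd) \<Rightarrow> bool" where
  "C2_on U G \<longleftrightarrow> (\<exists>(G' :: complex \<Rightarrow> (complex \<Rightarrow>\<^sub>L (complex ^ 'd)))
                      (G'' :: complex \<Rightarrow> complex \<Rightarrow>\<^sub>L (complex \<Rightarrow>\<^sub>L (complex ^ 'd))).
      (\<forall>x\<in>U. (G has_derivative blinfun_apply (G' x)) (at x)) \<and>
      (\<forall>x\<in>U. (G' has_derivative blinfun_apply (G'' x)) (at x)) \<and>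
      continuous_on U G'')"

definition analytic_disc_attached ::
    "(complex ^ 'd) set \<Rightarrow> (complex \<Rightarrow> complex ^ 'd) \<Rightarrow> bool" where
  "analytic_disc_attached V f \<longleftrightarrow>
     DA_variety V \<and>
     inj_on f (ball 0 1) \<and>
     (\<forall>i. (\<lambda>z. f z $ i) holomorphic_on ball 0 1) \<and>
     (\<forall>z\<in>ball 0 1. \<exists>i. deriv (\<lambda>w. f w $ i) z \<noteq> 0) \<and>
     f ` ball 0 1 \<subseteq> ball 0 1 \<and>
     V = f ` ball 0 1 \<and>
     (\<exists>U F. open U \<and> cball 0 1 \<subseteq> U \<and> C2_on U F \<and>
        (\<forall>z\<in>ball 0 1. F z = f z) \<and>
        (\<forall>x\<in>cball 0 1. norm (F x) = 1 \<longleftrightarrow> cmod x = 1))"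

definition Hf :: "(complex \<Rightarrow> complex ^ 'd) \<Rightarrow> (complex \<Rightarrow> complex) set" where
  "Hf f = rkhs (\<lambda>z w. 1 / (1 - cinner (f z) (f w))) (ball 0 1)"

end

theory Submission
  imports Defs
begin

lemma cinner_bound: "cmod (cinner a b) \<le> norm a * norm b"
proof -
  have "cmod (cinner a b) \<le> (\<Sum>i\<in>UNIV. cmod (a $ i * cnj (b $ i)))"
    unfolding cinner_def by (rule norm_sum)
  also have "\<dots> = (\<Sum>i\<in>UNIV. \<bar>cmod (a $ i)\<bar> * \<bar>cmod (b $ i)\<bar>)"
    by (simp add: norm_mult)
  also have "\<dots> \<le> L2_set (\<lambda>i. cmod (a $ i)) UNIV * L2_set (\<lambda>i. cmod (b $ i)) UNIV"
    by (rule L2_set_mult_ineq)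
  finally show ?thesis by (simp add: norm_vec_def)
qed

lemma cinner_self: "cinner a a = complex_of_real ((norm a)^2)"
proof -
  have "(norm a)^2 = (\<Sum>i\<in>UNIV. (cmod (a $ i))^2)"
    unfolding norm_vec_def L2_set_def by (simp add: sum_nonneg)
  have e: "\<And>i. a $ i * cnj (a $ i) = complex_of_real ((cmod (a $ i))^2)"
    by (metis complex_norm_square)
  show ?thesis unfolding cinner_def e of_real_sum[symmetric] using \<open>(norm a)^2 = _\<close> by simp
qed

lemma kern_re_nonneg:
  assumes "cmod w < 1" shows "0 \<le> Re (1 / (1 - w))"
proof -
  have "Re w \<le> cmod w" by (rule complex_Re_le_cmod)
  then have "0 \<le> 1 - Re w" using assms by simp
  then show ?thesis by (simp add: Re_divide)
qed

lemma kern_bound1: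
  fixes a b :: "complex ^ 'd"
  assumes "norm a < 1" "norm b < 1"
  shows "cmod (1 / (1 - cinner a b)) \<le> 1 / (1 - norm a * norm b)"
proof -
  have c: "cmod (cinner a b) \<le> norm a * norm b" by (rule cinner_bound)
  have p: "norm a * norm b < 1"
    using assms mult_left_le[of "norm b" "norm a"] by simp
  have "1 - norm a * norm b \<le> 1 - cmod (cinner a b)" using c by simp
  also have "\<dots> \<le> cmod (1 - cinner a b)"
    by (metis norm_one norm_triangle_ineq2)
  finally have l: "1 - norm a * norm b \<le> cmod (1 - cinner a b)" .
  have "0 < 1 - norm a * norm b" using p by simp
  then show ?thesis using l by (simp add: norm_divide frac_le)
qed

lemma kern_bound2:
  fixes a b :: "complex ^ 'd"
  assumes "norm a < 1" "norm b < 1"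
  shows "cmod (1 / (1 - cinner a b)) \<le> sqrt (1 / (1 - (norm a)^2)) * sqrt (1 / (1 - (norm b)^2))"
proof -
  let ?x = "norm a" and ?y = "norm b"
  have x: "0 \<le> ?x" "?x < 1" and y: "0 \<le> ?y" "?y < 1" using assms by auto
  have "?x * ?y \<le> ?x" using x y mult_left_le[of ?y ?x] by simp
  then have xy: "?x * ?y < 1" using x by linarith
  have "(1 - ?x^2) * (1 - ?y^2) \<le> (1 - ?x * ?y)^2"
  proof -
    have "0 \<le> (?x - ?y)^2" by simp
    then show ?thesis by (simp add: algebra_simps power2_eq_square)
  qed
  moreover have "0 < (1 - ?x^2) * (1 - ?y^2)" using x y
    by (simp add: abs_square_less_1)
  ultimately have "1 / (1 - ?x * ?y)^2 \<le> 1 / ((1 - ?x^2) * (1 - ?y^2))"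
    by (simp add: frac_le)
  then have "1 / (1 - ?x * ?y) \<le> sqrt (1 / ((1 - ?x^2) * (1 - ?y^2)))"
    using xy by (metis less_eq_real_def power_one_over real_le_rsqrt zero_le_divide_1_iff diff_gt_0_iff_gt)
  moreover have "1 / ((1 - ?x^2) * (1 - ?y^2)) = (1 / (1 - ?x^2)) * (1 / (1 - ?y^2))" by simp
  ultimately have "1 / (1 - ?x * ?y) \<le> sqrt (1 / (1 - ?x^2)) * sqrt (1 / (1 - ?y^2))"
    by (metis real_sqrt_mult)
  then show ?thesis using kern_bound1[OF assms] by linarith
qed

definition BF :: "('a \<Rightarrow> 'a \<Rightarrow> complex) \<Rightarrow> (complex \<times> 'a) list \<Rightarrow> (complex \<times> 'a) list \<Rightarrow> complex" where
  "BF K L M = (\<Sum>(c, w)\<leftarrow>L. \<Sum>(c', w')\<leftarrow>M. c * cnj c' * K w' w)"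

lemma knorm2_BF: "knorm2 K L = Re (BF K L L)"
  unfolding knorm2_def BF_def by simp

lemma BF_append1: "BF K (L1 @ L2) M = BF K L1 M + BF K L2 M"
  unfolding BF_def by simp

lemma BF_append2: "BF K L (M1 @ M2) = BF K L M1 + BF K L M2"
  unfolding BF_def by (induction L) (auto simp: algebra_simps)

lemma BF_neg1: "BF K (kneg L) M = - BF K L M"
  unfolding BF_def kneg_def
proof (induction L)
  case Nil then show ?case by simp
next
  case (Cons x L)
  obtain c w where x: "x = (c, w)" by force
  have "(\<Sum>(c', w')\<leftarrow>M. - c * cnj c' * K w' w) = - (\<Sum>(c', w')\<leftarrow>M. c * cnj c' * K w' w)"
    by (induction M) auto
  then show ?case using Cons by (simp add: x)
qed

lemma BF_neg2: "BF K L (kneg M) = - BF K L M"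
  unfolding BF_def kneg_def
proof (induction L)
  case Nil then show ?case by simp
next
  case (Cons x L)
  obtain c w where x: "x = (c, w)" by force
  have "(\<Sum>(c', w')\<leftarrow>map (\<lambda>(c, w). (- c, w)) M. c * cnj c' * K w' w) = - (\<Sum>(c', w')\<leftarrow>M. c * cnj c' * K w' w)"
    by (induction M) auto
  then show ?case using Cons by (simp add: x)
qed

lemma knorm2_cancel1: "knorm2 K ((A @ T) @ kneg A) = Re (BF K T T)"
  unfolding knorm2_BF by (simp add: BF_append1 BF_append2 BF_neg1 BF_neg2 kneg_def[symmetric])

lemma knorm2_cancel2: "knorm2 K (A @ kneg (A @ T)) = Re (BF K T T)"
proof -
  have "kneg (A @ T) = kneg A @ kneg T" by (simp add: kneg_def)
  then show ?thesis
    unfolding knorm2_BF by (simp add: BF_append1 BF_append2 BF_neg1 BF_neg2)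
qed

lemma BF_upt: "BF K (map (\<lambda>j. (c j, p j)) [m..<n]) (map (\<lambda>j. (c j, p j)) [m..<n])
   = (\<Sum>i\<in>{m..<n}. \<Sum>j\<in>{m..<n}. c i * cnj (c j) * K (p j) (p i))"
  unfolding BF_def by (simp add: sum_set_upt_conv_sum_list_nat[symmetric] o_def)

lemma geo_tail: "m \<le> n \<Longrightarrow> (\<Sum>i\<in>{m..<n}. (1/2::real)^i) = 2*(1/2)^m - 2*(1/2)^n"
proof (induction n rule: dec_induct)
  case base then show ?case by simp
next
  case (step n) then show ?case by (simp add: sum.atLeastLessThan_Suc)
qed

lemma dbl_bound:
  fixes a :: "nat \<Rightarrow> nat \<Rightarrow> complex"
  assumes "finite I" "\<And>i j. i \<in> I \<Longrightarrow> j \<in> I \<Longrightarrow> cmod (a i j) \<le> b i * b j"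
  shows "cmod (\<Sum>i\<in>I. \<Sum>j\<in>I. a i j) \<le> (\<Sum>i\<in>I. b i)^2"
proof -
  have "cmod (\<Sum>i\<in>I. \<Sum>j\<in>I. a i j) \<le> (\<Sum>i\<in>I. cmod (\<Sum>j\<in>I. a i j))" by (rule norm_sum)
  also have "\<dots> \<le> (\<Sum>i\<in>I. \<Sum>j\<in>I. cmod (a i j))" by (intro sum_mono norm_sum)
  also have "\<dots> \<le> (\<Sum>i\<in>I. \<Sum>j\<in>I. b i * b j)" by (intro sum_mono assms(2))
  also have "\<dots> = (\<Sum>i\<in>I. b i)^2" by (simp add: power2_eq_square sum_product)
  finally show ?thesis .
qed

lemma amgm:
  fixes t w A B :: real
  assumes "0 < t" "0 < w"
  shows "2 * A * B \<le> t * w * A^2 + B^2 / (t * w)"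
proof -
  have tw: "0 < t * w" using assms by simp
  have "0 \<le> (t * w * A - B)^2" by simp
  moreover have "t * w * A^2 + B^2 / (t * w) - 2 * A * B = (t * w * A - B)^2 / (t * w)"
    using assms by (simp add: field_simps power2_eq_square)
  ultimately have "0 \<le> t * w * A^2 + B^2 / (t * w) - 2 * A * B" using tw by simp
  then show ?thesis by simp
qed

lemma boundary_lip:
  fixes F :: "complex \<Rightarrow> complex ^ 'd"
  assumes "(F has_derivative F') (at 1)" "norm (F 1) = 1"
  shows "\<exists>L>0. \<exists>\<rho><1. \<forall>r. \<rho> < r \<and> r < 1 \<longrightarrow> 1 - norm (F (complex_of_real r)) \<le> L * (1 - r)"
proof -
  from assms(1)[unfolded has_derivative_at_alt] have bl: "bounded_linear F'"
    and "\<forall>e>0. \<exists>d>0. \<forall>y. norm (y - 1) < d \<longrightarrow> norm (F y - F 1 - F' (y - 1)) \<le> e * norm (y - 1)"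
    by auto
  then obtain d where d: "d > 0" "\<And>y. norm (y - 1) < d \<Longrightarrow> norm (F y - F 1 - F' (y - 1)) \<le> norm (y - 1)"
    by (metis mult_1 zero_less_one)
  obtain K where K: "K > 0" "\<And>x. norm (F' x) \<le> norm x * K"
    using bounded_linear.pos_bounded[OF bl] by blast
  have "\<forall>r. 1 - d < r \<and> r < 1 \<longrightarrow> 1 - norm (F (complex_of_real r)) \<le> (1 + K) * (1 - r)"
  proof (intro allI impI)
    fix r :: real assume r: "1 - d < r \<and> r < 1"
    let ?y = "complex_of_real r"
    have ny: "norm (?y - 1) = 1 - r" using r
      by (metis abs_of_pos diff_gt_0_iff_gt norm_minus_commute norm_of_real of_real_1 of_real_diff)
    have "norm (F ?y - F 1 - F' (?y - 1)) \<le> 1 - r" using d(2)[of ?y] ny r by simp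
    moreover have "norm (F' (?y - 1)) \<le> (1 - r) * K" using K(2)[of "?y - 1"] ny by simp
    moreover have "norm (F ?y - F 1) \<le> norm (F ?y - F 1 - F' (?y - 1)) + norm (F' (?y - 1))"
      using norm_triangle_ineq[of "F ?y - F 1 - F' (?y - 1)" "F' (?y - 1)"] by simp
    ultimately have "norm (F ?y - F 1) \<le> (1 - r) + (1 - r) * K"
      by linarith
    moreover have "norm (F 1) - norm (F ?y) \<le> norm (F ?y - F 1)"
      by (metis norm_minus_commute norm_triangle_ineq2)
    ultimately show "1 - norm (F ?y) \<le> (1 + K) * (1 - r)" using assms(2) by (simp add: algebra_simps)
  qed
  moreover have "0 < 1 + K" "1 - d < 1" using K d by auto
  ultimately show ?thesis by blast
qed

lemma ks_summable:
  assumes "s \<le> 0" "0 \<le> r" "r < 1"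
  shows "summable (\<lambda>n. (1 + real n) powr s * r^(2*n))"
proof (rule summable_comparison_test[of _ "\<lambda>n. (r^2)^n"])
  show "summable (\<lambda>n. (r^2)^n)" using assms by (simp add: abs_square_less_1)
  show "\<exists>N. \<forall>n\<ge>N. norm ((1 + real n) powr s * r ^ (2 * n)) \<le> (r\<^sup>2) ^ n"
  proof (intro exI allI impI)
    fix n :: nat
    have "(1 + real n) powr s \<le> (1 + real n) powr 0" using assms by (intro powr_mono) auto
    then have "(1 + real n) powr s \<le> 1" by simp
    then show "norm ((1 + real n) powr s * r ^ (2 * n)) \<le> (r\<^sup>2) ^ n" using assms
      by (simp add: power_mult mult_left_le_one_le)
  qed
qed

lemma ks_small:
  assumes "s < 0" "0 < \<epsilon>" "\<rho>0 < 1"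
  shows "\<exists>r. max 0 \<rho>0 < r \<and> r < 1 \<and> (1 - r) * (\<Sum>n. (1 + real n) powr s * r^(2*n)) \<le> \<epsilon>"
proof -
  have "filterlim (\<lambda>n. 1 + real n) at_top sequentially"
    by (rule filterlim_tendsto_add_at_top[OF tendsto_const filterlim_real_sequentially])
  then have lim: "(\<lambda>n. (1 + real n) powr s) \<longlonglongrightarrow> 0"
    by (rule tendsto_neg_powr[OF assms(1)])
  have "eventually (\<lambda>n. (1 + real n) powr s < \<epsilon>/2) sequentially"
    using order_tendstoD(2)[OF lim, of "\<epsilon>/2"] assms by simp
  then obtain N where N: "\<And>n. n \<ge> N \<Longrightarrow> (1 + real n) powr s < \<epsilon>/2"
    by (auto simp: eventually_sequentially)
  define m where "m = max (max 0 \<rho>0) (1 - \<epsilon> / (2 * (real N + 1)))"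
  have m1: "m < 1" unfolding m_def using assms by auto
  have m0: "0 \<le> m" "max 0 \<rho>0 \<le> m" "1 - \<epsilon> / (2 * (real N + 1)) \<le> m" unfolding m_def by auto
  define r where "r = (m + 1) / 2"
  have r: "m < r" "r < 1" "0 < r" using m1 m0 unfolding r_def by auto
  have r1: "1 - r \<le> \<epsilon> / (2 * (real N + 1))" using r m0 by linarith
  let ?g = "\<lambda>n. (1 + real n) powr s * r^(2*n)"
  let ?b = "\<lambda>n. \<epsilon>/2 * (r^2)^n + (if n \<in> {..<N} then 1 else 0)"
  have r2: "norm (r^2) < 1" using r by (simp add: abs_square_less_1)
  have bs: "?b sums (\<epsilon>/2 * (1 / (1 - r^2)) + real N)"
  proof (rule sums_add)
    show "(\<lambda>n. \<epsilon>/2 * (r^2)^n) sums (\<epsilon>/2 * (1 / (1 - r^2)))"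
      by (rule sums_mult) (use geometric_sums[OF r2] in simp)
    show "(\<lambda>n. if n \<in> {..<N} then 1 else 0) sums real N"
      using sums_If_finite_set[of "{..<N}" "\<lambda>_. 1::real"] by simp
  qed
  have gb: "?g n \<le> ?b n" for n
  proof -
    have p1: "(1 + real n) powr s \<le> 1"
    proof -
      have "(1 + real n) powr s \<le> (1 + real n) powr 0" using assms by (intro powr_mono) auto
      then show ?thesis by simp
    qed
    have rp: "0 \<le> r^(2*n)" "r^(2*n) \<le> 1" using r by (auto simp: power_le_one)
    show ?thesis
    proof (cases "n < N")
      case True
      have "?g n \<le> 1 * 1" using p1 rp by (intro mult_mono) auto
      moreover have "0 \<le> \<epsilon>/2 * (r^2)^n" using assms r by simp
      ultimately show ?thesis using True by simp
    next
      case False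
      have "?g n \<le> \<epsilon>/2 * r^(2*n)" using N[of n] False rp by (intro mult_right_mono) auto
      then show ?thesis using False by (simp add: power_mult)
    qed
  qed
  have gs: "summable ?g" using ks_summable[of s r] assms r by simp
  have "(\<Sum>n. ?g n) \<le> \<epsilon>/2 * (1 / (1 - r^2)) + real N"
    using suminf_le[OF gb gs sums_summable[OF bs]] sums_unique[OF bs] by simp
  then have "(1 - r) * (\<Sum>n. ?g n) \<le> (1 - r) * (\<epsilon>/2 * (1 / (1 - r^2)) + real N)"
    using r by (intro mult_left_mono) auto
  also have "\<dots> = \<epsilon>/2 * ((1 - r) / (1 - r^2)) + (1 - r) * real N" by (simp add: algebra_simps)
  also have "\<dots> \<le> \<epsilon>/2 * 1 + \<epsilon>/2"
  proof (rule add_mono)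
    have "r * r < 1 * 1" using r by (intro mult_strict_mono) auto
    then have "(1 - r) / (1 - r^2) = 1 / (1 + r)" using r
      by (simp add: field_simps power2_eq_square)
    also have "\<dots> \<le> 1" using r by simp
    finally show "\<epsilon>/2 * ((1 - r) / (1 - r^2)) \<le> \<epsilon>/2 * 1" using assms by (intro mult_left_mono) auto
    have "(1 - r) * real N \<le> \<epsilon> / (2 * (real N + 1)) * real N" using r1 by (intro mult_right_mono) auto
    also have "\<dots> \<le> \<epsilon>/2" using assms by (simp add: field_simps)
    finally show "(1 - r) * real N \<le> \<epsilon>/2" .
  qed
  finally have "(1 - r) * (\<Sum>n. ?g n) \<le> \<epsilon>" by simp
  then show ?thesis using r m0 by (intro exI[of _ r]) auto
qed

lemma hs_bound:
  fixes a :: "nat \<Rightarrow> complex"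
  assumes "s < 0" "0 \<le> r" "r < 1"
    and sm: "(\<lambda>n. a n * complex_of_real r ^ n) sums H"
    and sw: "summable (\<lambda>n. (1 + real n) powr (-s) * (cmod (a n))^2)"
  shows "cmod H \<le> sqrt ((suminf (\<lambda>n. (1 + real n) powr (-s) * (cmod (a n))^2) + 1) * (\<Sum>n. (1 + real n) powr s * r^(2*n)))"
proof -
  define M where "M = suminf (\<lambda>n. (1 + real n) powr (-s) * (cmod (a n))^2)"
  define k where "k = (\<Sum>n. (1 + real n) powr s * r^(2*n))"
  have ks: "summable (\<lambda>n. (1 + real n) powr s * r^(2*n))" using ks_summable[of s r] assms by simp
  have M0: "0 \<le> M" unfolding M_def by (rule suminf_nonneg[OF sw]) simp
  have k1: "1 \<le> k"
  proof -
    have "(\<Sum>n\<in>{0}. (1 + real n) powr s * r^(2*n)) \<le> k"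
      unfolding k_def by (rule sum_le_suminf[OF ks]) (use assms in auto)
    then show ?thesis by simp
  qed
  define q where "q = sqrt (k * (M + 1))"
  have q: "0 < q" "q^2 = k * (M + 1)" unfolding q_def using k1 M0 by auto
  define t where "t = q / (M + 1)"
  have t: "0 < t" unfolding t_def using q M0 by simp
  have tM: "t * (M + 1) = q" unfolding t_def using M0 by simp
  have kt: "k / t = q" unfolding t_def using q M0 by (simp add: field_simps power2_eq_square)
  define w where "w n = (1 + real n) powr (-s)" for n
  have w: "0 < w n" "(1 + real n) powr s = 1 / w n" for n
    unfolding w_def by (auto simp: powr_minus divide_inverse)
  let ?b = "\<lambda>n. (t * ((1 + real n) powr (-s) * (cmod (a n))^2) + ((1 + real n) powr s * r^(2*n)) / t) / 2"
  have bs: "?b sums ((t * M + k / t) / 2)"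
    unfolding M_def k_def
    by (intro sums_divide sums_add sums_mult summable_sums sw sums_divide ks)
  have nb: "norm (a n * complex_of_real r ^ n) \<le> ?b n" for n
  proof -
    have "2 * cmod (a n) * r^n \<le> t * w n * (cmod (a n))^2 + (r^n)^2 / (t * w n)"
      by (rule amgm[OF t w(1)])
    moreover have "(r^n)^2 / (t * w n) = ((1 + real n) powr s * r^(2*n)) / t"
      using w[of n] t by (simp add: field_simps power_mult power_even_eq)
    moreover have "norm (a n * complex_of_real r ^ n) = cmod (a n) * r^n"
      using assms by (simp add: norm_mult norm_power)
    ultimately show ?thesis unfolding w_def by (simp add: algebra_simps)
  qed
  have "cmod H \<le> (t * M + k / t) / 2"
    using norm_suminf_le[OF nb sums_summable[OF bs]] sums_unique[OF sm] sums_unique[OF bs] by simp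
  also have "\<dots> \<le> (t * (M + 1) + k / t) / 2" using t by simp
  also have "\<dots> = q" using tM kt by simp
  finally show ?thesis unfolding q_def M_def k_def by (simp add: mult.commute)
qed

lemma lin_aux: "(a::real) \<le> b \<Longrightarrow> 2 * a - d = e \<Longrightarrow> 0 \<le> e \<Longrightarrow> d \<le> 2 * b"
  by linarith

theorem theorem1p12:
  fixes V :: "(complex ^ 'd) set" and f :: "complex \<Rightarrow> complex ^ 'd" and s :: real
  assumes "analytic_disc_attached V f"
    and "s < 0"
  shows "Hs s \<noteq> Hf f"
proof
  assume eq: "Hs s = Hf f"
  from assms(1) have sub: "f ` ball 0 1 \<subseteq> ball 0 1"
    and "\<exists>U F. open U \<and> cball 0 1 \<subseteq> U \<and> C2_on U F \<and>
        (\<forall>z\<in>ball 0 1. F z = f z) \<and> (\<forall>x\<in>cball 0 1. norm (F x) = 1 \<longleftrightarrow> cmod x = 1)"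
    unfolding analytic_disc_attached_def by blast+
  then obtain U F where U: "open U" "cball 0 1 \<subseteq> U" "C2_on U F" "\<forall>z\<in>ball 0 1. F z = f z"
      "\<forall>x\<in>cball 0 1. norm (F x) = 1 \<longleftrightarrow> cmod x = 1"
    by blast
  from U(3) obtain G' :: "complex \<Rightarrow> (complex \<Rightarrow>\<^sub>L (complex ^ 'd))"
    where G': "\<forall>x\<in>U. (F has_derivative blinfun_apply (G' x)) (at x)"
    unfolding C2_on_def by blast
  have one: "(1::complex) \<in> U" using U(2) by auto
  have F1: "norm (F 1) = 1" using U(5) by auto
  obtain L \<rho> where L: "L > 0" "\<rho> < 1" "\<forall>r. \<rho> < r \<and> r < 1 \<longrightarrow> 1 - norm (F (complex_of_real r)) \<le> L * (1 - r)"
    using boundary_lip[OF G'[rule_format, OF one] F1] by blast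
  have fb: "norm (f z) < 1" if "z \<in> ball 0 1" for z
  proof -
    have "f z \<in> ball 0 1" using sub that by blast
    then show ?thesis by simp
  qed
  define K where "K = (\<lambda>z w. 1 / (1 - cinner (f z) (f w)))"
  define D where "D = (\<lambda>z. 1 / (1 - (norm (f z))^2))"
  have D1: "1 \<le> D z" "0 < 1 - (norm (f z))^2" if "z \<in> ball 0 1" for z
  proof -
    have "(norm (f z))^2 < 1" using fb[OF that] by (simp add: abs_square_less_1)
    then show "0 < 1 - (norm (f z))^2" by simp
    then show "1 \<le> D z" unfolding D_def by simp
  qed
  have KD: "K z z = complex_of_real (D z)" for z
    unfolding K_def D_def cinner_self by simp
  have Kb: "cmod (K z w) \<le> sqrt (D z) * sqrt (D w)" if "z \<in> ball 0 1" "w \<in> ball 0 1" for z w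
    unfolding K_def D_def using kern_bound2[OF fb[OF that(1)] fb[OF that(2)]] .
  have Kb1: "cmod (K z w) \<le> 1 / (1 - norm (f z))" if "z \<in> ball 0 1" "w \<in> ball 0 1" for z w
  proof -
    have "norm (f z) * norm (f w) \<le> norm (f z)" using fb[OF that(2)] mult_left_le[of "norm (f w)" "norm (f z)"] by simp
    then have "1 / (1 - norm (f z) * norm (f w)) \<le> 1 / (1 - norm (f z))"
      using fb[OF that(1)] by (intro divide_left_mono) auto
    then show ?thesis unfolding K_def using kern_bound1[OF fb[OF that(1)] fb[OF that(2)]] by linarith
  qed
  have Kre: "0 \<le> Re (K z w)" if "z \<in> ball 0 1" "w \<in> ball 0 1" for z w
  proof -
    have "norm (f z) * norm (f w) \<le> norm (f z)" using fb[OF that(2)] mult_left_le[of "norm (f w)" "norm (f z)"] by simp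
    then have "cmod (cinner (f z) (f w)) < 1" using cinner_bound[of "f z" "f w"] fb[OF that(1)] by linarith
    then show ?thesis unfolding K_def by (rule kern_re_nonneg)
  qed
  have Dlow: "1 / (2 * L * (1 - r)) \<le> D (complex_of_real r)" if "max 0 \<rho> < r" "r < 1" for r
  proof -
    let ?p = "complex_of_real r"
    have pb: "?p \<in> ball 0 1" using that by auto
    let ?x = "norm (f ?p)"
    have x: "0 \<le> ?x" "?x < 1" using fb[OF pb] by auto
    have "1 - ?x \<le> L * (1 - r)" using L(3) that U(4) pb by auto
    moreover have "2 * (1 - ?x) - (1 - ?x^2) = (1 - ?x)^2" by (simp add: algebra_simps power2_eq_square)
    moreover have "0 \<le> (1 - ?x)^2" by simp
    ultimately have "1 - ?x^2 \<le> 2 * (L * (1 - r))" by (rule lin_aux)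
    then have le: "1 - ?x^2 \<le> 2 * L * (1 - r)" by (simp add: mult.assoc)
    have "1 / (2 * L * (1 - r)) \<le> 1 / (1 - ?x^2)"
      using le D1(2)[OF pb] by (intro divide_left_mono) auto
    then show ?thesis unfolding D_def by simp
  qed
  have "\<forall>i. \<exists>r. max 0 \<rho> < r \<and> r < 1 \<and> (1 - r) * (\<Sum>n. (1 + real n) powr s * r^(2*n)) \<le> (1/8)^i"
    using ks_small[OF assms(2) _ L(2)] by simp
  then obtain r where r: "\<And>i. max 0 \<rho> < r i" "\<And>i. r i < 1"
      "\<And>i. (1 - r i) * (\<Sum>n. (1 + real n) powr s * (r i)^(2*n)) \<le> (1/8)^i"
    by metis
  define p where "p i = complex_of_real (r i)" for i
  have pb: "p i \<in> ball 0 1" for i unfolding p_def using r(1)[of i] r(2)[of i] by auto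
  define c where "c i = (1/2)^i / sqrt (D (p i))" for i
  have c: "0 < c i" "c i \<le> (1/2)^i" "c i * sqrt (D (p i)) = (1/2)^i" "c i * D (p i) = (1/2)^i * sqrt (D (p i))" for i
  proof -
    have d: "1 \<le> D (p i)" using D1(1)[OF pb] .
    then have sd: "1 \<le> sqrt (D (p i))" by simp
    show "0 < c i" unfolding c_def using d by simp
    show "c i \<le> (1/2)^i" unfolding c_def using sd by (simp add: divide_le_eq)
    show "c i * sqrt (D (p i)) = (1/2)^i" unfolding c_def using sd by simp
    have "c i * D (p i) = (c i * sqrt (D (p i))) * sqrt (D (p i))"
      using d by (simp add: mult.assoc)
    also have "\<dots> = (1/2)^i * sqrt (D (p i))" unfolding c_def using sd by simp
    finally show "c i * D (p i) = (1/2)^i * sqrt (D (p i))" .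
  qed
  define h where "h z = (\<Sum>j. complex_of_real (c j) * K z (p j))" for z
  have hsum: "summable (\<lambda>j. complex_of_real (c j) * K z (p j))" if "z \<in> ball 0 1" for z
  proof (rule summable_comparison_test[of _ "\<lambda>j. (1/2)^j * (1 / (1 - norm (f z)))"])
    show "summable (\<lambda>j. (1/2::real)^j * (1 / (1 - norm (f z))))"
      by (intro summable_mult2 summable_geometric) simp
    show "\<exists>N. \<forall>n\<ge>N. norm (complex_of_real (c n) * K z (p n)) \<le> (1/2)^n * (1 / (1 - norm (f z)))"
    proof (intro exI allI impI)
      fix n :: nat
      have "norm (complex_of_real (c n) * K z (p n)) = c n * cmod (K z (p n))"
        using c(1)[of n] by (simp add: norm_mult)
      also have "\<dots> \<le> (1/2)^n * (1 / (1 - norm (f z)))"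
        using c(1,2)[of n] Kb1[OF that pb[of n]] by (intro mult_mono) auto
      finally show "norm (complex_of_real (c n) * K z (p n)) \<le> (1/2)^n * (1 / (1 - norm (f z)))" .
    qed
  qed
  have hHf: "h \<in> Hf f"
  proof -
    define ps where "ps n = map (\<lambda>j. (complex_of_real (c j), p j)) [0..<n]" for n
    have psapp: "ps n = ps m @ map (\<lambda>j. (complex_of_real (c j), p j)) [m..<n]" if "m \<le> n" for m n
    proof -
      have "[0..<n] = [0..<m] @ [m..<n]" using upt_add_eq_append[of 0 m "n - m"] that by simp
      then show ?thesis unfolding ps_def by simp
    qed
    have Tb: "knorm2 K (ps n @ kneg (ps m)) \<le> 4 * (1/2)^m \<and> knorm2 K (ps m @ kneg (ps n)) \<le> 4 * (1/2)^m"
      if "m \<le> n" for m n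
    proof -
      let ?T = "map (\<lambda>j. (complex_of_real (c j), p j)) [m..<n]"
      have ab: "cmod (complex_of_real (c i) * cnj (complex_of_real (c j)) * K (p j) (p i)) \<le> (1/2)^i * (1/2)^j" for i j
      proof -
        have "cmod (complex_of_real (c i) * cnj (complex_of_real (c j)) * K (p j) (p i)) = c i * c j * cmod (K (p j) (p i))"
          using c(1)[of i] c(1)[of j] by (simp add: norm_mult)
        also have "\<dots> \<le> c i * c j * (sqrt (D (p j)) * sqrt (D (p i)))"
          using c(1)[of i] c(1)[of j] Kb[OF pb pb] by (intro mult_left_mono) auto
        also have "\<dots> = (c i * sqrt (D (p i))) * (c j * sqrt (D (p j)))" by (simp add: algebra_simps)
        also have "\<dots> = (1/2)^i * (1/2)^j" by (simp only: c(3))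
        finally show ?thesis .
      qed
      have "Re (BF K ?T ?T) \<le> cmod (BF K ?T ?T)" by (rule complex_Re_le_cmod)
      also have "\<dots> = cmod (\<Sum>i\<in>{m..<n}. \<Sum>j\<in>{m..<n}. complex_of_real (c i) * cnj (complex_of_real (c j)) * K (p j) (p i))"
        by (simp only: BF_upt)
      also have "\<dots> \<le> (\<Sum>i\<in>{m..<n}. (1/2::real)^i)^2"
        using dbl_bound[of "{m..<n}" "\<lambda>i j. complex_of_real (c i) * cnj (complex_of_real (c j)) * K (p j) (p i)" "\<lambda>i. (1/2::real)^i"] ab
        by simp
      also have "\<dots> \<le> (2 * (1/2)^m)^2"
      proof -
        have g: "(\<Sum>i\<in>{m..<n}. (1/2::real)^i) = 2*(1/2)^m - 2*(1/2)^n" by (rule geo_tail[OF that])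
        have "(0::real) \<le> 2*(1/2)^n" by simp
        then have le: "(\<Sum>i\<in>{m..<n}. (1/2::real)^i) \<le> 2*(1/2)^m" unfolding g by linarith
        have "0 \<le> (\<Sum>i\<in>{m..<n}. (1/2::real)^i)" by (rule sum_nonneg) simp
        then show ?thesis using power_mono[OF le, of 2] by blast
      qed
      also have "\<dots> \<le> 4 * (1/2)^m"
      proof -
        have "(1/2::real)^m * (1/2)^m \<le> 1 * (1/2)^m" by (intro mult_right_mono) (auto simp: power_le_one)
        then show ?thesis by (simp add: power2_eq_square)
      qed
      finally have R: "Re (BF K ?T ?T) \<le> 4 * (1/2)^m" .
      show ?thesis using R knorm2_cancel1[of K "ps m" ?T] knorm2_cancel2[of K "ps m" ?T] psapp[OF that] by simp
    qed
    have cauchy: "\<forall>e>0. \<exists>N. \<forall>m\<ge>N. \<forall>n\<ge>N. knorm2 K (ps n @ kneg (ps m)) < e"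
    proof (intro allI impI)
      fix e :: real assume e: "e > 0"
      obtain N where N: "(1/2::real)^N < e/4" using real_arch_pow_inv[of "e/4" "1/2::real"] e by auto
      have mono: "(1/2::real)^k \<le> (1/2)^N" if "N \<le> k" for k using that by (intro power_decreasing) auto
      have "\<forall>m\<ge>N. \<forall>n\<ge>N. knorm2 K (ps n @ kneg (ps m)) < e"
      proof (intro allI impI)
        fix m n assume mn: "N \<le> m" "N \<le> n"
        show "knorm2 K (ps n @ kneg (ps m)) < e"
        proof (cases "m \<le> n")
          case True
          then have "knorm2 K (ps n @ kneg (ps m)) \<le> 4 * (1/2)^m" using Tb by blast
          then show ?thesis using mono[OF mn(1)] N by linarith
        next
          case False
          then have "knorm2 K (ps n @ kneg (ps m)) \<le> 4 * (1/2)^n" using Tb[of n m] by auto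
          then show ?thesis using mono[OF mn(2)] N by linarith
        qed
      qed
      then show "\<exists>N. \<forall>m\<ge>N. \<forall>n\<ge>N. knorm2 K (ps n @ kneg (ps m)) < e" by blast
    qed
    have conv: "\<forall>z\<in>ball 0 1. (\<lambda>n. kcomb K (ps n) z) \<longlonglongrightarrow> h z"
    proof
      fix z :: complex assume z: "z \<in> ball 0 1"
      have "kcomb K (ps n) z = (\<Sum>j<n. complex_of_real (c j) * K z (p j))" for n
        unfolding kcomb_def ps_def
        by (simp add: sum_set_upt_conv_sum_list_nat[symmetric] o_def atLeast0LessThan)
      then show "(\<lambda>n. kcomb K (ps n) z) \<longlonglongrightarrow> h z"
        unfolding h_def using summable_LIMSEQ[OF hsum[OF z]] by simp
    qed
    have sb: "\<forall>n. snd ` set (ps n) \<subseteq> ball 0 1" unfolding ps_def using pb by auto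
    have "h \<in> rkhs K (ball 0 1)" unfolding rkhs_def using sb cauchy conv by blast
    then show ?thesis unfolding Hf_def K_def .
  qed
  have hnot: "h \<notin> Hs s"
  proof
    assume "h \<in> Hs s"
    then obtain a where a: "\<forall>z\<in>ball 0 1. (\<lambda>n. a n * z ^ n) sums h z"
      and sw: "summable (\<lambda>n. (1 + real n) powr (- s) * (cmod (a n))^2)"
      unfolding Hs_def by blast
    define M where "M = suminf (\<lambda>n. (1 + real n) powr (- s) * (cmod (a n))^2)"
    have M0: "0 \<le> M" unfolding M_def by (rule suminf_nonneg[OF sw]) simp
    define ks where "ks x = (\<Sum>n. (1 + real n) powr s * x^(2*n))" for x
    have bound: "2^i \<le> 2 * L * (M + 1)" for i
    proof -
      have ri: "0 \<le> r i" "r i < 1" "max 0 \<rho> < r i" using r(1)[of i] r(2)[of i] by auto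
      have hp: "(\<lambda>n. a n * complex_of_real (r i) ^ n) sums h (p i)"
        using a pb[of i] unfolding p_def by auto
      have up: "cmod (h (p i)) \<le> sqrt ((M + 1) * ks (r i))"
        using hs_bound[OF assms(2) ri(1) ri(2) hp sw] unfolding M_def ks_def .
      have ksn: "0 \<le> ks (r i)" unfolding ks_def
        by (rule suminf_nonneg[OF ks_summable]) (use assms(2) ri in auto)
      have lo: "(1/2)^i * sqrt (D (p i)) \<le> cmod (h (p i))"
      proof -
        have hs: "summable (\<lambda>j. complex_of_real (c j) * K (p i) (p j))" by (rule hsum[OF pb])
        have "Re (h (p i)) = (\<Sum>j. Re (complex_of_real (c j) * K (p i) (p j)))"
          unfolding h_def by (rule Re_suminf[OF hs])
        moreover have "(\<Sum>j\<in>{i}. Re (complex_of_real (c j) * K (p i) (p j))) \<le> (\<Sum>j. Re (complex_of_real (c j) * K (p i) (p j)))"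
        proof (rule sum_le_suminf)
          show "summable (\<lambda>j. Re (complex_of_real (c j) * K (p i) (p j)))" using summable_Re[OF hs] .
          show "finite {i}" by simp
          fix j show "0 \<le> Re (complex_of_real (c j) * K (p i) (p j))"
            using c(1)[of j] Kre[OF pb pb] by simp
        qed
        moreover have "Re (K (p i) (p i)) = D (p i)" by (simp add: KD)
        ultimately have "c i * D (p i) \<le> Re (h (p i))" by simp
        then show ?thesis using c(4)[of i] complex_Re_le_cmod[of "h (p i)"] by linarith
      qed
      have x0: "0 \<le> (1/2::real)^i * sqrt (D (p i))" using D1(1)[OF pb[of i]] by simp
      have "((1/2::real)^i * sqrt (D (p i)))^2 \<le> (sqrt ((M + 1) * ks (r i)))^2"
        using lo up x0 by (intro power_mono) auto
      also have "\<dots> = (M + 1) * ks (r i)" using M0 ksn by simp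
      finally have sq: "((1/2::real)^i * sqrt (D (p i)))^2 \<le> (M + 1) * ks (r i)" .
      have q4: "((1/2::real)^i)^2 = (1/4)^i"
        by (simp add: power2_eq_square power_mult_distrib[symmetric])
      have "((1/2::real)^i * sqrt (D (p i)))^2 = (1/4)^i * D (p i)"
        using D1(1)[OF pb[of i]] q4 by (simp add: power_mult_distrib)
      with sq have AD: "(1/4)^i * D (p i) \<le> (M + 1) * ks (r i)" by simp
      define \<delta> where "\<delta> = 1 - r i"
      have \<delta>: "0 < \<delta>" unfolding \<delta>_def using ri by simp
      have Dl: "1 / (2 * L * \<delta>) \<le> D (p i)" unfolding \<delta>_def p_def using Dlow[OF ri(3) ri(2)] .
      have pos: "0 < 2 * L * \<delta>" using L(1) \<delta> by simp
      have "(1/4::real)^i / (2 * L * \<delta>) = (1/4)^i * (1 / (2 * L * \<delta>))" by simp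
      also have "\<dots> \<le> (1/4)^i * D (p i)" using Dl by (intro mult_left_mono) auto
      also have "\<dots> \<le> (M + 1) * ks (r i)" by (rule AD)
      finally have "(1/4::real)^i / (2 * L * \<delta>) \<le> (M + 1) * ks (r i)" .
      then have "(1/4::real)^i \<le> (M + 1) * ks (r i) * (2 * L * \<delta>)"
        using pos by (simp add: pos_divide_le_eq)
      also have "\<dots> = 2 * L * (M + 1) * (\<delta> * ks (r i))" by (simp add: algebra_simps)
      also have "\<dots> \<le> 2 * L * (M + 1) * (1/8)^i"
        using r(3)[of i] L(1) M0 unfolding \<delta>_def ks_def by (intro mult_left_mono) auto
      finally have A: "(1/4::real)^i \<le> 2 * L * (M + 1) * (1/8)^i" .
      have "(1/4::real)^i = 2^i * (1/8)^i" by (simp add: power_mult_distrib[symmetric])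
      with A have "2^i * (1/8::real)^i \<le> 2 * L * (M + 1) * (1/8)^i" by simp
      then show "2^i \<le> 2 * L * (M + 1)" by (simp add: mult_le_cancel_right_pos)
    qed
    obtain i where "2 * L * (M + 1) < (2::real)^i" using real_arch_pow[of "2::real"] by auto
    with bound[of i] show False by simp
  qed
  show False using hHf hnot eq by simp
qed

end
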